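(* Let $p<q$ be positive integers, let $\boldsymbol\alpha\in\mathbb C^p$ be a unit vector, $\boldsymbol\beta=\mathrm{FT}_p(\boldsymbol\alpha)$ and $\boldsymbol\gamma=\mathrm{FT}_q(\boldsymbol\alpha)$. Let $S\subseteq[p]$ be nonempty and $r>1/100$. If $\|\boldsymbol\beta_S\|_2^2=c$ and $$q\geq\left(\frac{6400\,r\ln p\,\sqrt{\ln\frac{c}{|S|\,100r}}}{\sqrt{c\,\ln\!\left(1-\frac{1}{100r}\right)}}\right)p,$$ then $$\|\boldsymbol\gamma_{S'}\|_2^2\geq\frac{p}{q}\left(1-\frac1r\right)c .$$
   Context: Write $[N]=\{0,\dots,N-1\}$ and $\omega_N=e^{2\pi i/N}$. For $N\ge p$, $\mathrm{FT}_N(\boldsymbol\alpha)=\sum_{c=0}^{N-1}\left(\frac{1}{\sqrt N}\sum_{i=0}^{p-1}\omega_N^{ic}\alpha_i\right)|c\rangle\in\mathbb C^N$. Write $\boldsymbol\beta=(\beta_i)_{i\in[p]}$, $\boldsymbol\gamma=(\gamma_i)_{i\in[q]}$. For $i\in[p]$, $i'=\lfloor\frac qp i\rfloor$, and $S'=\{s':s\in S\}\subseteq[q]$. For a vector $\boldsymbol\zeta$ and an index set $T$, $\boldsymbol\zeta_T$ is the vector agreeing with $\boldsymbol\zeta$ on indices in $T$ and zero elsewhere. $\|\cdot\|_2$ is the Euclidean norm. *)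

theory Defs
  imports "HOL-Analysis.Analysis"
begin

definition omega :: "nat \<Rightarrow> complex" where
  "omega N = cis (2 * pi / real N)"

text \<open>FT_N(alpha) for alpha in C^p (given as a function on [p]); the result is the
  vector in C^N whose c-th coordinate (c < N) is given below.\<close>
definition FT :: "nat \<Rightarrow> nat \<Rightarrow> (nat \<Rightarrow> complex) \<Rightarrow> nat \<Rightarrow> complex" where
  "FT N p \<alpha> c = (1 / sqrt (real N)) * (\<Sum>i<p. omega N ^ (i * c) * \<alpha> i)"

definition prime_idx :: "nat \<Rightarrow> nat \<Rightarrow> nat \<Rightarrow> nat" where
  "prime_idx p q i = nat \<lfloor>real q / real p * real i\<rfloor>"

definition restr_norm2 :: "(nat \<Rightarrow> complex) \<Rightarrow> nat set \<Rightarrow> real" where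
  "restr_norm2 \<zeta> T = (\<Sum>t\<in>T. (cmod (\<zeta> t))\<^sup>2)"

end

theory Submission
  imports Defs
begin

lemma omega_pow: "omega N ^ (j * c) = cis (2 * pi * real j * real c / real N)"
  unfolding omega_def Complex.DeMoivre by (simp add: field_simps)

lemma roots_sum_zero:
  fixes m :: int
  assumes p: "0 < p" and m: "m \<noteq> 0" "\<bar>m\<bar> < int p"
  shows "(\<Sum>i<p. cis (2 * pi * real i * real_of_int m / real p)) = 0"
proof -
  define z where "z = cis (2 * pi * real_of_int m / real p)"
  have zi: "cis (2 * pi * real i * real_of_int m / real p) = z ^ i" for i
    unfolding z_def Complex.DeMoivre by (simp add: field_simps)
  have "z ^ p = cis (2 * pi * real_of_int m)"
    unfolding z_def Complex.DeMoivre using p by (simp add: field_simps)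
  also have "\<dots> = 1"
    by (metis cis_multiple_2pi mult.commute Ints_of_int)
  finally have zp: "z ^ p = 1" .
  have "z \<noteq> 1"
  proof
    assume "z = 1"
    then have "exp (\<i> * complex_of_real (2 * pi * real_of_int m / real p)) = 1"
      unfolding z_def by (simp add: cis_conv_exp)
    then obtain n :: int where n: "2 * pi * real_of_int m / real p = 2 * pi * real_of_int n"
      by (auto simp: exp_eq_1)
    then have "real_of_int m = real p * real_of_int n" using p by (simp add: field_simps)
    then have "m = int p * n" by (metis of_int_eq_iff of_int_mult of_int_of_nat_eq)
    with m show False
      by (cases "n = 0") (auto simp: abs_mult intro: ccontr dest: mult_le_cancel_left1[THEN iffD1])
  qed
  then show ?thesis unfolding zi using geometric_sum[of z p] zp by simp
qed

lemma G_sum: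
  assumes p: "0 < p" and j: "j < p" and l: "l < p"
  shows "(\<Sum>i<p. cis (2 * pi * real i * (real j - real l) / real p)) = (if j = l then of_nat p else 0)"
proof (cases "j = l")
  case True then show ?thesis by simp
next
  case False
  have "(\<Sum>i<p. cis (2 * pi * real i * (real j - real l) / real p))
      = (\<Sum>i<p. cis (2 * pi * real i * real_of_int (int j - int l) / real p))" by simp
  also have "\<dots> = 0" using roots_sum_zero[OF p, of "int j - int l"] False j l by auto
  finally show ?thesis using False by simp
qed

lemma FT_expand: "FT N p a c = complex_of_real (1 / sqrt (real N)) * (\<Sum>j<p. cis (2 * pi * real j * real c / real N) * a j)"
  unfolding FT_def omega_pow by simp

lemma parseval:
  assumes p: "0 < p"
  shows "(\<Sum>i<p. (cmod (FT p p a i))\<^sup>2) = (\<Sum>j<p. (cmod (a j))\<^sup>2)"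
proof -
  define w where "w i j = cis (2 * pi * real j * real i / real p)" for i j
  have sq: "complex_of_real ((cmod (FT p p a i))\<^sup>2) = 
     complex_of_real (1 / real p) * (\<Sum>j<p. \<Sum>l<p. a j * cnj (a l) * cis (2 * pi * real i * (real j - real l) / real p))" for i
  proof -
    have "complex_of_real ((cmod (FT p p a i))\<^sup>2) = FT p p a i * cnj (FT p p a i)"
      by (rule complex_norm_square)
    also have "\<dots> = complex_of_real (1 / real p) * ((\<Sum>j<p. w i j * a j) * (\<Sum>l<p. cnj (w i l) * cnj (a l)))"
    proof -
      have e: "FT p p a i = complex_of_real (1 / sqrt (real p)) * (\<Sum>j<p. w i j * a j)"
        unfolding FT_expand w_def by simp
      have ff: "(1 / sqrt (real p)) * (1 / sqrt (real p)) = 1 / real p" using p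
        by simp
      then have f: "complex_of_real (1 / sqrt (real p)) * complex_of_real (1 / sqrt (real p)) = complex_of_real (1 / real p)"
        by (subst of_real_mult[symmetric]) (simp only: ff)
      show ?thesis unfolding e complex_cnj_mult complex_cnj_complex_of_real cnj_sum
        by (simp only: f[symmetric] mult_ac)
    qed
    also have "(\<Sum>j<p. w i j * a j) * (\<Sum>l<p. cnj (w i l) * cnj (a l)) = 
        (\<Sum>j<p. \<Sum>l<p. a j * cnj (a l) * (w i j * cnj (w i l)))"
      unfolding sum_product by (intro sum.cong refl) (simp only: mult_ac)
    also have "\<dots> = (\<Sum>j<p. \<Sum>l<p. a j * cnj (a l) * cis (2 * pi * real i * (real j - real l) / real p))"
      unfolding w_def cis_cnj cis_mult
      by (intro sum.cong refl arg_cong2[where f="(*)"] arg_cong[where f=cis]) (simp add: field_simps)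
    finally show ?thesis .
  qed
  have "complex_of_real (\<Sum>i<p. (cmod (FT p p a i))\<^sup>2) = 
     complex_of_real (1 / real p) * (\<Sum>j<p. \<Sum>l<p. a j * cnj (a l) * (\<Sum>i<p. cis (2 * pi * real i * (real j - real l) / real p)))"
  proof -
    have "complex_of_real (\<Sum>i<p. (cmod (FT p p a i))\<^sup>2) = 
      complex_of_real (1 / real p) * (\<Sum>i<p. \<Sum>j<p. \<Sum>l<p. a j * cnj (a l) * cis (2 * pi * real i * (real j - real l) / real p))"
      unfolding of_real_sum sq by (simp only: sum_distrib_left)
    also have "(\<Sum>i<p. \<Sum>j<p. \<Sum>l<p. a j * cnj (a l) * cis (2 * pi * real i * (real j - real l) / real p))
       = (\<Sum>j<p. \<Sum>i<p. \<Sum>l<p. a j * cnj (a l) * cis (2 * pi * real i * (real j - real l) / real p))"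
      by (rule sum.swap)
    also have "\<dots> = (\<Sum>j<p. \<Sum>l<p. \<Sum>i<p. a j * cnj (a l) * cis (2 * pi * real i * (real j - real l) / real p))"
      by (intro sum.cong refl sum.swap)
    also have "\<dots> = (\<Sum>j<p. \<Sum>l<p. a j * cnj (a l) * (\<Sum>i<p. cis (2 * pi * real i * (real j - real l) / real p)))"
      by (simp only: sum_distrib_left)
    finally show ?thesis .
  qed
  also have "\<dots> = complex_of_real (1 / real p) * (\<Sum>j<p. \<Sum>l<p. a j * cnj (a l) * (if j = l then of_nat p else 0))"
    by (intro arg_cong2[where f="(*)"] sum.cong refl) (simp add: G_sum[OF p])
  also have "\<dots> = (\<Sum>j<p. a j * cnj (a j))"
  proof -
    have "(\<Sum>l<p. a j * cnj (a l) * (if j = l then of_nat p else 0)) = of_nat p * (a j * cnj (a j))" if "j < p" for j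
    proof -
      have "(\<Sum>l<p. a j * cnj (a l) * (if j = l then of_nat p else 0)) = (\<Sum>l<p. if j = l then a j * cnj (a l) * of_nat p else 0)"
        by (intro sum.cong refl) simp
      also have "\<dots> = a j * cnj (a j) * of_nat p" using that by (simp only: sum.delta' finite_lessThan) simp
      finally show ?thesis by (simp only: mult_ac)
    qed
    then have "(\<Sum>j<p. \<Sum>l<p. a j * cnj (a l) * (if j = l then of_nat p else 0)) = of_nat p * (\<Sum>j<p. a j * cnj (a j))"
      by (simp add: sum_distrib_left)
    then show ?thesis using p by simp
  qed
  also have "\<dots> = complex_of_real (\<Sum>j<p. (cmod (a j))\<^sup>2)"
    unfolding of_real_sum complex_norm_square ..
  finally show ?thesis using of_real_eq_iff by blast
qed

lemma L2_scale_le: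
  assumes "\<And>i. i \<in> A \<Longrightarrow> cmod (f i) \<le> M * cmod (g i)" "0 \<le> M"
  shows "L2_set (\<lambda>i. cmod (f i)) A \<le> M * L2_set (\<lambda>i. cmod (g i)) A"
  unfolding L2_set_right_distrib[OF assms(2)]
  by (rule L2_set_mono) (use assms in auto)

lemma L2_add_le:
  "L2_set (\<lambda>i. cmod (f i + g i)) A \<le> L2_set (\<lambda>i. cmod (f i)) A + L2_set (\<lambda>i. cmod (g i)) A"
proof -
  have "L2_set (\<lambda>i. cmod (f i + g i)) A \<le> L2_set (\<lambda>i. cmod (f i) + cmod (g i)) A"
    by (rule L2_set_mono) (auto intro: norm_triangle_ineq)
  also have "\<dots> \<le> L2_set (\<lambda>i. cmod (f i)) A + L2_set (\<lambda>i. cmod (g i)) A"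
    by (rule L2_set_triangle_ineq)
  finally show ?thesis .
qed

lemma L2_sum_le:
  assumes "finite K"
  shows "L2_set (\<lambda>i. cmod (\<Sum>k\<in>K. f k i)) A \<le> (\<Sum>k\<in>K. L2_set (\<lambda>i. cmod (f k i)) A)"
  using assms
proof (induction K rule: finite_induct)
  case empty then show ?case by (simp add: L2_set_def)
next
  case (insert a F)
  have "L2_set (\<lambda>i. cmod (\<Sum>k\<in>insert a F. f k i)) A = L2_set (\<lambda>i. cmod (f a i + (\<Sum>k\<in>F. f k i))) A"
    using insert by simp
  also have "\<dots> \<le> L2_set (\<lambda>i. cmod (f a i)) A + L2_set (\<lambda>i. cmod (\<Sum>k\<in>F. f k i)) A"
    by (rule L2_add_le)
  also have "\<dots> \<le> L2_set (\<lambda>i. cmod (f a i)) A + (\<Sum>k\<in>F. L2_set (\<lambda>i. cmod (f k i)) A)"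
    using insert by simp
  finally show ?case using insert by simp
qed

lemma L2_subset_le:
  assumes "A \<subseteq> B" "finite B"
  shows "L2_set f A \<le> L2_set f B"
  unfolding L2_set_def
  by (rule real_sqrt_le_mono, rule sum_mono2) (use assms in auto)

lemma L2_const_le:
  assumes "\<And>i. i \<in> A \<Longrightarrow> cmod (f i) \<le> M"
  shows "L2_set (\<lambda>i. cmod (f i)) A \<le> sqrt (real (card A)) * M"
proof (cases "A = {}")
  case True then show ?thesis by simp
next
  case False
  then obtain a where "a \<in> A" by auto
  then have M: "0 \<le> M" using assms[of a] norm_ge_zero order_trans by blast
  have "L2_set (\<lambda>i. cmod (f i)) A \<le> L2_set (\<lambda>i. M) A"
    by (rule L2_set_mono) (use assms in auto)
  also have "\<dots> = sqrt (real (card A)) * M" using M by (simp add: L2_set_constant)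
  finally show ?thesis .
qed

lemma L2_cmod_sq: "(L2_set (\<lambda>i. cmod (f i)) A)\<^sup>2 = (\<Sum>i\<in>A. (cmod (f i))\<^sup>2)"
  unfolding L2_set_def by (simp add: sum_nonneg)

lemma geom_le2:
  fixes x :: real
  assumes "0 \<le> x" "x \<le> 1/2"
  shows "(\<Sum>k<n. x ^ k) \<le> 2"
proof -
  have "(1 - x) * (\<Sum>k<n. x ^ k) = 1 - x ^ n"
    by (simp add: one_diff_power_eq)
  also have "\<dots> \<le> 1" using assms by simp
  finally have "(1 - x) * (\<Sum>k<n. x ^ k) \<le> 1" .
  moreover have "(1/2) * (\<Sum>k<n. x ^ k) \<le> (1 - x) * (\<Sum>k<n. x ^ k)"
    by (rule mult_right_mono) (use assms in \<open>auto intro: sum_nonneg\<close>)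
  ultimately show ?thesis by linarith
qed

definition R :: "nat \<Rightarrow> real \<Rightarrow> complex" where
  "R K y = exp (\<i> * complex_of_real y) - (\<Sum>k\<le>K. (\<i> * complex_of_real y) ^ k / fact k)"

lemma cis_taylor:
  "cis y - 1 = (\<Sum>k<K. (\<i> * complex_of_real y) ^ Suc k / fact (Suc k)) + R K y"
proof -
  have "(\<Sum>k\<le>K. (\<i> * complex_of_real y) ^ k / fact k) = (\<Sum>k<Suc K. (\<i> * complex_of_real y) ^ k / fact k)"
    by (simp add: lessThan_Suc_atMost)
  also have "\<dots> = 1 + (\<Sum>k<K. (\<i> * complex_of_real y) ^ Suc k / fact (Suc k))"
    by (subst sum.lessThan_Suc_shift) simp
  finally show ?thesis unfolding R_def cis_conv_exp by simp
qed

lemma R_bound: "cmod (R K y) \<le> \<bar>y\<bar> ^ Suc K / fact K"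
  using Taylor_exp[of "\<i> * complex_of_real y" K] unfolding R_def
  by (simp add: norm_mult)

lemma decomp:
  "(\<Sum>j<p. cis (\<phi> j + \<psi> j) * a j) - (\<Sum>j<p. cis (\<phi> j) * a j) =
   (\<Sum>k<K. \<Sum>j<p. cis (\<phi> j) * a j * ((\<i> * complex_of_real (\<psi> j)) ^ Suc k / fact (Suc k)))
   + (\<Sum>j<p. cis (\<phi> j) * a j * R K (\<psi> j))"
proof -
  have "(\<Sum>j<p. cis (\<phi> j + \<psi> j) * a j) - (\<Sum>j<p. cis (\<phi> j) * a j)
      = (\<Sum>j<p. cis (\<phi> j) * a j * (cis (\<psi> j) - 1))"
    by (simp add: sum_subtractf[symmetric] cis_mult[symmetric] algebra_simps)
  also have "\<dots> = (\<Sum>j<p. (\<Sum>k<K. cis (\<phi> j) * a j * ((\<i> * complex_of_real (\<psi> j)) ^ Suc k / fact (Suc k)))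
        + cis (\<phi> j) * a j * R K (\<psi> j))"
    unfolding cis_taylor[of _ K] by (simp add: distrib_left sum_distrib_left)
  also have "\<dots> = (\<Sum>k<K. \<Sum>j<p. cis (\<phi> j) * a j * ((\<i> * complex_of_real (\<psi> j)) ^ Suc k / fact (Suc k)))
   + (\<Sum>j<p. cis (\<phi> j) * a j * R K (\<psi> j))"
    by (simp add: sum.distrib sum.swap[of _ "{..<p}" "{..<K}"])
  finally show ?thesis .
qed

lemma alpha_le1:
  fixes p :: nat
  assumes "(\<Sum>i<p. (cmod (\<alpha> i))\<^sup>2) = 1" "j < p"
  shows "cmod (\<alpha> j) \<le> 1"
proof -
  have "(cmod (\<alpha> j))\<^sup>2 \<le> (\<Sum>i<p. (cmod (\<alpha> i))\<^sup>2)"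
    using assms by (intro member_le_sum) auto
  then have "(cmod (\<alpha> j))\<^sup>2 \<le> 1\<^sup>2" using assms by simp
  then show ?thesis by (rule power2_le_imp_le) simp
qed

lemma W_eq:
  fixes t :: real
  assumes that: "0 < p"
  shows "(\<Sum>j<p. cis (2*pi*real j*real i/real p) * \<alpha> j * ((\<i> * complex_of_real (2*pi*real j*t)) ^ m / fact m))
     = ((\<i> * complex_of_real (2*pi*t)) ^ m / fact m) * (complex_of_real (sqrt (real p)) * FT p p (\<lambda>j. of_nat j ^ m * \<alpha> j) i)"
proof -
  have s: "complex_of_real (sqrt (real p)) * complex_of_real (1 / sqrt (real p)) = 1"
    using that by (simp flip: of_real_mult)
  have "(\<i> * complex_of_real (2*pi*real j*t)) ^ m = (\<i> * complex_of_real (2*pi*t)) ^ m * of_nat j ^ m" for j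
    by (simp add: power_mult_distrib mult_ac)
  then have "(\<Sum>j<p. cis (2*pi*real j*real i/real p) * \<alpha> j * ((\<i> * complex_of_real (2*pi*real j*t)) ^ m / fact m))
     = ((\<i> * complex_of_real (2*pi*t)) ^ m / fact m) * (\<Sum>j<p. cis (2*pi*real j*real i/real p) * (of_nat j ^ m * \<alpha> j))"
    by (simp add: sum_distrib_left mult_ac)
  also have "\<dots> = ((\<i> * complex_of_real (2*pi*t)) ^ m / fact m) * (complex_of_real (sqrt (real p)) * FT p p (\<lambda>j. of_nat j ^ m * \<alpha> j) i)"
    unfolding FT_expand mult.assoc[symmetric] s by simp
  finally show ?thesis .
qed

lemma L2_FT_pow:
  fixes p :: nat
  assumes p: "0 < p" and a1: "(\<Sum>i<p. (cmod (\<alpha> i))\<^sup>2) = 1"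
  shows "L2_set (\<lambda>i. cmod (FT p p (\<lambda>j. of_nat j ^ m * \<alpha> j) i)) {..<p} \<le> (real p - 1) ^ m"
proof -
  have "L2_set (\<lambda>i. cmod (FT p p (\<lambda>j. of_nat j ^ m * \<alpha> j) i)) {..<p}
      = L2_set (\<lambda>j. cmod (of_nat j ^ m * \<alpha> j)) {..<p}"
    unfolding L2_set_def using parseval[OF p] by simp
  also have "\<dots> \<le> (real p - 1) ^ m * L2_set (\<lambda>j. cmod (\<alpha> j)) {..<p}"
  proof (rule L2_scale_le)
    fix j assume "j \<in> {..<p}"
    then have "real j \<le> real p - 1" by auto
    then have "real j ^ m \<le> (real p - 1) ^ m" by (rule power_mono) simp
    then show "cmod (of_nat j ^ m * \<alpha> j) \<le> (real p - 1) ^ m * cmod (\<alpha> j)"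
      by (simp add: norm_mult norm_power mult_right_mono)
  qed (use p in simp)
  also have "L2_set (\<lambda>j. cmod (\<alpha> j)) {..<p} = 1"
    unfolding L2_set_def using a1 by simp
  finally show ?thesis by simp
qed

lemma err_bound:
  fixes p q :: nat and \<alpha> :: "nat \<Rightarrow> complex" and \<theta> :: "nat \<Rightarrow> real" and A :: "nat set" and x :: real
  assumes p: "0 < p" and q: "0 < q" and a1: "(\<Sum>i<p. (cmod (\<alpha> i))\<^sup>2) = 1"
    and A: "A \<subseteq> {..<p}" and th: "\<And>i. i \<in> A \<Longrightarrow> \<bar>\<theta> i\<bar> \<le> 1 / real q"
    and xdef: "x = 2 * pi * (real p - 1) / real q" and xle: "x \<le> 1/2"
  shows "L2_set (\<lambda>i. cmod (complex_of_real (1 / sqrt (real q)) *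
            ((\<Sum>j<p. cis (2*pi*real j*real i/real p + 2*pi*real j*\<theta> i) * \<alpha> j)
             - (\<Sum>j<p. cis (2*pi*real j*real i/real p) * \<alpha> j)))) A
         \<le> sqrt (real p / real q) * (3 * x)"
proof -
  define c0 where "c0 = complex_of_real (1 / sqrt (real q))"
  define W where "W k i = (\<Sum>j<p. cis (2*pi*real j*real i/real p) * \<alpha> j *
     ((\<i> * complex_of_real (2*pi*real j*\<theta> i)) ^ Suc k / fact (Suc k)))" for k i
  define Rs where "Rs i = (\<Sum>j<p. cis (2*pi*real j*real i/real p) * \<alpha> j * R p (2*pi*real j*\<theta> i))" for i
  have x0: "0 \<le> x" unfolding xdef using p by auto
  have finA: "finite A" using A finite_subset by blast
  have cardA: "card A \<le> p" using card_mono[OF _ A] by simp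
  have e_eq: "c0 * ((\<Sum>j<p. cis (2*pi*real j*real i/real p + 2*pi*real j*\<theta> i) * \<alpha> j)
             - (\<Sum>j<p. cis (2*pi*real j*real i/real p) * \<alpha> j)) = (\<Sum>k<p. c0 * W k i) + c0 * Rs i" for i
    unfolding decomp[where K=p] W_def Rs_def by (simp add: distrib_left sum_distrib_left)
  have Wb: "L2_set (\<lambda>i. cmod (c0 * W k i)) A \<le> sqrt (real p / real q) * x ^ Suc k" for k
  proof -
    define M where "M = (1 / sqrt (real q)) * ((2 * pi / real q) ^ Suc k / fact (Suc k)) * sqrt (real p)"
    have M0: "0 \<le> M" unfolding M_def by simp
    have "L2_set (\<lambda>i. cmod (c0 * W k i)) A \<le> M * L2_set (\<lambda>i. cmod (FT p p (\<lambda>j. of_nat j ^ Suc k * \<alpha> j) i)) A"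
    proof (rule L2_scale_le[OF _ M0])
      fix i assume i: "i \<in> A"
      have "cmod (c0 * W k i) = (1 / sqrt (real q)) * ((2 * pi * \<bar>\<theta> i\<bar>) ^ Suc k / fact (Suc k)) * sqrt (real p)
              * cmod (FT p p (\<lambda>j. of_nat j ^ Suc k * \<alpha> j) i)"
        unfolding W_def W_eq[OF p] c0_def by (simp add: norm_mult norm_divide norm_power abs_mult norm_fact del: fact_Suc power_Suc)
      also have "\<dots> \<le> M * cmod (FT p p (\<lambda>j. of_nat j ^ Suc k * \<alpha> j) i)"
        unfolding M_def
        by (intro mult_right_mono mult_left_mono divide_right_mono power_mono) (use th[OF i] q in \<open>auto simp: field_simps\<close>)
      finally show "cmod (c0 * W k i) \<le> M * cmod (FT p p (\<lambda>j. of_nat j ^ Suc k * \<alpha> j) i)" .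
    qed
    also have "\<dots> \<le> M * L2_set (\<lambda>i. cmod (FT p p (\<lambda>j. of_nat j ^ Suc k * \<alpha> j) i)) {..<p}"
      by (intro mult_left_mono L2_subset_le A M0) simp
    also have "\<dots> \<le> M * (real p - 1) ^ Suc k"
      by (intro mult_left_mono L2_FT_pow p a1 M0)
    also have "\<dots> = sqrt (real p / real q) * (x ^ Suc k / fact (Suc k))"
    proof -
      have xx: "x ^ Suc k = (2*pi/real q) ^ Suc k * (real p - 1) ^ Suc k"
        unfolding xdef power_mult_distrib[symmetric] by (simp add: field_simps)
      show ?thesis unfolding M_def xx real_sqrt_divide by (simp del: power_Suc fact_Suc)
    qed
    also have "\<dots> \<le> sqrt (real p / real q) * x ^ Suc k"
    proof -
      have "x ^ Suc k / fact (Suc k) \<le> x ^ Suc k / 1"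
        by (rule divide_left_mono) (use x0 fact_ge_1[of "Suc k"] in auto)
      then show ?thesis by (intro mult_left_mono) auto
    qed
    finally show ?thesis .
  qed
  have Rb: "L2_set (\<lambda>i. cmod (c0 * Rs i)) A \<le> sqrt (real p / real q) * x"
  proof -
    have pt: "cmod (c0 * Rs i) \<le> (1 / sqrt (real q)) * (real p * (x ^ Suc p / fact p))" if i: "i \<in> A" for i
    proof -
      have "cmod (Rs i) \<le> (\<Sum>j<p. cmod (cis (2*pi*real j*real i/real p) * \<alpha> j * R p (2*pi*real j*\<theta> i)))"
        unfolding Rs_def by (rule norm_sum)
      also have "\<dots> \<le> (\<Sum>j<p. x ^ Suc p / fact p)"
      proof (rule sum_mono)
        fix j assume j: "j \<in> {..<p}"
        have "\<bar>2*pi*real j*\<theta> i\<bar> \<le> x"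
        proof -
          have "\<bar>2*pi*real j*\<theta> i\<bar> = 2*pi*real j*\<bar>\<theta> i\<bar>" by (simp add: abs_mult)
          also have "\<dots> \<le> 2*pi*(real p - 1) * (1 / real q)"
            by (intro mult_mono th[OF i]) (use j in auto)
          finally show ?thesis unfolding xdef by simp
        qed
        then have yb: "\<bar>2*pi*real j*\<theta> i\<bar> ^ Suc p \<le> x ^ Suc p" by (intro power_mono) auto
        have Rle: "cmod (R p (2*pi*real j*\<theta> i)) \<le> x ^ Suc p / fact p"
          using order_trans[OF R_bound[of p "2*pi*real j*\<theta> i"] divide_right_mono[OF yb fact_ge_zero]] .
        moreover have ale: "cmod (\<alpha> j) \<le> 1" using alpha_le1[OF a1] j by simp
        ultimately show "cmod (cis (2*pi*real j*real i/real p) * \<alpha> j * R p (2*pi*real j*\<theta> i)) \<le> x ^ Suc p / fact p"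
        proof -
          have "cmod (\<alpha> j) * cmod (R p (2*pi*real j*\<theta> i)) \<le> 1 * (x ^ Suc p / fact p)"
            by (rule mult_mono) (use Rle ale in auto)
          then show ?thesis by (simp add: norm_mult)
        qed
      qed
      also have "\<dots> = real p * (x ^ Suc p / fact p)" by simp
      finally have rr: "cmod (Rs i) \<le> real p * (x ^ Suc p / fact p)" .
      have "cmod (c0 * Rs i) = (1 / sqrt (real q)) * cmod (Rs i)" unfolding c0_def norm_mult norm_of_real by simp
      then show ?thesis using mult_left_mono[OF rr, of "1 / sqrt (real q)"] by simp
    qed
    have "L2_set (\<lambda>i. cmod (c0 * Rs i)) A \<le> sqrt (real (card A)) * ((1 / sqrt (real q)) * (real p * (x ^ Suc p / fact p)))"
      by (rule L2_const_le) (rule pt)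
    also have "\<dots> \<le> sqrt (real p) * ((1 / sqrt (real q)) * (real p * (x ^ Suc p / fact p)))"
      by (intro mult_right_mono) (use cardA x0 in auto)
    also have "real p * (x ^ Suc p / fact p) \<le> x"
    proof -
      have "x ^ Suc p = x * x ^ p" by simp
      moreover have "x ^ p \<le> 1" using x0 xle by (intro power_le_one) auto
      moreover have "real p \<le> fact p" using fact_ge_self[of p] by (metis of_nat_fact of_nat_le_iff)
      ultimately have "real p * x ^ Suc p \<le> fact p * x"
      proof -
        have xx1: "x * x ^ p \<le> x * 1" using \<open>x ^ p \<le> 1\<close> x0 by (rule mult_left_mono)
        have "real p * (x * x ^ p) \<le> fact p * (x * 1)"
          by (rule mult_mono[OF \<open>real p \<le> fact p\<close> xx1]) (use x0 in auto)
        then show ?thesis by simp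
      qed
      then show ?thesis by (simp add: divide_le_eq mult_ac)
    qed
    then have "sqrt (real p) * ((1 / sqrt (real q)) * (real p * (x ^ Suc p / fact p))) \<le> sqrt (real p) * ((1 / sqrt (real q)) * x)"
      by (intro mult_left_mono) auto
    also have "\<dots> = sqrt (real p / real q) * x" by (simp add: real_sqrt_divide)
    finally show ?thesis .
  qed
  have "L2_set (\<lambda>i. cmod (c0 * ((\<Sum>j<p. cis (2*pi*real j*real i/real p + 2*pi*real j*\<theta> i) * \<alpha> j)
             - (\<Sum>j<p. cis (2*pi*real j*real i/real p) * \<alpha> j)))) A
      = L2_set (\<lambda>i. cmod ((\<Sum>k<p. c0 * W k i) + c0 * Rs i)) A" unfolding e_eq ..
  also have "\<dots> \<le> L2_set (\<lambda>i. cmod (\<Sum>k<p. c0 * W k i)) A + L2_set (\<lambda>i. cmod (c0 * Rs i)) A"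
    by (rule L2_add_le)
  also have "\<dots> \<le> (\<Sum>k<p. L2_set (\<lambda>i. cmod (c0 * W k i)) A) + sqrt (real p / real q) * x"
    by (intro add_mono L2_sum_le Rb) simp
  also have "\<dots> \<le> (\<Sum>k<p. sqrt (real p / real q) * x ^ Suc k) + sqrt (real p / real q) * x"
    by (intro add_mono sum_mono Wb) simp
  also have "(\<Sum>k<p. sqrt (real p / real q) * x ^ Suc k) = sqrt (real p / real q) * x * (\<Sum>k<p. x ^ k)"
    by (simp add: sum_distrib_left sum_distrib_right mult_ac)
  also have "\<dots> \<le> sqrt (real p / real q) * x * 2"
    by (intro mult_left_mono geom_le2 x0 xle) (use x0 in simp)
  finally show ?thesis unfolding c0_def by (simp add: algebra_simps)
qed

lemma prime_idx_real:
  assumes "0 < p"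
  shows "real (prime_idx p q i) = real_of_int \<lfloor>real q / real p * real i\<rfloor>"
  unfolding prime_idx_def by (simp add: assms)

lemma prime_idx_theta:
  assumes p: "0 < p" and q: "0 < q"
  shows "\<bar>real (prime_idx p q i) / real q - real i / real p\<bar> \<le> 1 / real q"
proof -
  define t where "t = real q / real p * real i"
  have f1: "real_of_int \<lfloor>t\<rfloor> \<le> t" and f2: "t < real_of_int \<lfloor>t\<rfloor> + 1" by linarith+
  have e: "real (prime_idx p q i) / real q - real i / real p = (real_of_int \<lfloor>t\<rfloor> - t) / real q"
    unfolding prime_idx_real[OF p] t_def using p q by (simp add: field_simps)
  have "\<bar>real_of_int \<lfloor>t\<rfloor> - t\<bar> \<le> 1" using f1 f2 by linarith
  then show ?thesis unfolding e using q by (simp add: divide_right_mono)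
qed

lemma prime_idx_mono:
  assumes p: "0 < p" and pq: "p < q" and ij: "i < j"
  shows "prime_idx p q i < prime_idx p q j"
proof -
  have "real q / real p * real i + 1 \<le> real q / real p * real j"
  proof -
    have "1 \<le> real q / real p" using p pq by simp
    moreover have "1 \<le> real j - real i" using ij by simp
    ultimately have "1 * 1 \<le> real q / real p * (real j - real i)" by (intro mult_mono) auto
    then show ?thesis by (simp add: algebra_simps diff_divide_distrib)
  qed
  then have "\<lfloor>real q / real p * real i\<rfloor> + 1 \<le> \<lfloor>real q / real p * real j\<rfloor>"
    by (metis floor_add_int floor_mono of_int_1)
  moreover have "0 \<le> \<lfloor>real q / real p * real i\<rfloor>" by simp
  ultimately show ?thesis unfolding prime_idx_def by linarith
qed

lemma prime_idx_inj:
  assumes p: "0 < p" and pq: "p < q"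
  shows "inj_on (prime_idx p q) S"
proof (rule inj_onI)
  fix i j assume "prime_idx p q i = prime_idx p q j"
  then show "i = j" using prime_idx_mono[OF p pq, of i j] prime_idx_mono[OF p pq, of j i]
    by (cases i j rule: linorder_cases) auto
qed

lemma ln_bounds:
  fixes c r :: real and n :: nat
  assumes c0: "0 < c" and c1: "c \<le> 1" and r: "1 < r" and n: "1 \<le> n" and p2: "2 \<le> p"
  shows "real p * (1600 * r / sqrt c) \<le> (6400 * r * ln (real p) * sqrt (ln (c / (real n * 100 * r)))
                   / sqrt (c * ln (1 - 1 / (100 * r)))) * real p"
proof -
  define L1 where "L1 = ln (c / (real n * 100 * r))"
  define L2 where "L2 = ln (1 - 1 / (100 * r))"
  have y0: "0 < c / (real n * 100 * r)" using c0 r n by simp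
  have nr: "1 \<le> real n * r" using n r by (metis less_eq_real_def mult_mono' of_nat_1 of_nat_mono zero_le_one mult_1)
  have "c / (real n * 100 * r) \<le> 1 / 100"
    using c1 nr by (simp add: divide_simps)
  then have L1b: "L1 \<le> - 1/4" unfolding L1_def using ln_le_minus_one[OF y0] by linarith
  then have "(1/2)\<^sup>2 \<le> - L1" by (simp add: power2_eq_square)
  then have s1: "1/2 \<le> sqrt (- L1)" by (rule real_le_rsqrt)
  have z0: "0 < 1 - 1 / (100 * r)" and z1: "1 - 1 / (100 * r) < 1" and z2: "99/100 \<le> 1 - 1 / (100 * r)"
    using r by (auto simp: field_simps)
  have L2n: "L2 < 0" unfolding L2_def using z0 z1 by simp
  have "ln (1 / (1 - 1 / (100 * r))) \<le> 1 / (1 - 1 / (100 * r)) - 1"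
    by (rule ln_le_minus_one) (use z0 in simp)
  moreover have "1 / (1 - 1 / (100 * r)) \<le> 100/99" using z2 z0 by (simp add: divide_simps)
  moreover have "ln (1 / (1 - 1 / (100 * r))) = - L2" unfolding L2_def using z0 by (simp add: ln_div)
  ultimately have "- L2 \<le> 1" by linarith
  then have "c * (- L2) \<le> c * 1" using c0 by (intro mult_left_mono) auto
  then have "- (c * L2) \<le> c" by simp
  then have s2: "sqrt (- (c * L2)) \<le> sqrt c" by simp
  have s2p: "0 < sqrt (- (c * L2))" using c0 L2n by (simp add: mult_pos_neg)
  have lp: "1/2 \<le> ln (real p)"
  proof -
    have "ln (1/2::real) \<le> 1/2 - 1" by (rule ln_le_minus_one) simp
    then have "1/2 \<le> ln (2::real)" by (simp add: ln_div)
    also have "ln 2 \<le> ln (real p)" using p2 by simp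
    finally show ?thesis .
  qed
  have "(1/2) / sqrt c \<le> sqrt (- L1) / sqrt (- (c * L2))"
    by (rule frac_le) (use s1 s2 s2p L1b in auto)
  moreover have "sqrt L1 / sqrt (c * L2) = sqrt (- L1) / sqrt (- (c * L2))"
    by (simp add: real_sqrt_minus)
  ultimately have q1: "(1/2) / sqrt c \<le> sqrt L1 / sqrt (c * L2)" by simp
  have "1600 * r / sqrt c = 6400 * r * (1/2) * ((1/2) / sqrt c)" by simp
  also have "\<dots> \<le> 6400 * r * ln (real p) * (sqrt L1 / sqrt (c * L2))"
    by (intro mult_mono mult_left_mono lp q1) (use r c0 lp in auto)
  finally have "1600 * r / sqrt c \<le> 6400 * r * ln (real p) * sqrt L1 / sqrt (c * L2)" by simp
  then have "1600 * r / sqrt c * real p \<le> 6400 * r * ln (real p) * sqrt L1 / sqrt (c * L2) * real p"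
    by (rule mult_right_mono) simp
  then show ?thesis unfolding L1_def L2_def by (simp only: mult.commute[of "real p"])
qed

theorem lemma3:
  fixes p q :: nat and \<alpha> :: "nat \<Rightarrow> complex" and S :: "nat set" and r c :: real
  assumes "0 < p" and "p < q"
    and "(\<Sum>i<p. (cmod (\<alpha> i))\<^sup>2) = 1"
    and "S \<subseteq> {..<p}" and "S \<noteq> {}"
    and "r > 1 / 100"
    and "restr_norm2 (FT p p \<alpha>) S = c"
    and "real q \<ge> (6400 * r * ln (real p) * sqrt (ln (c / (real (card S) * 100 * r)))
                   / sqrt (c * ln (1 - 1 / (100 * r)))) * real p"
  shows "restr_norm2 (FT q p \<alpha>) (prime_idx p q ` S) \<ge> real p / real q * (1 - 1 / r) * c"
proof -
  note p = assms(1) and pq = assms(2) and a1 = assms(3) and Sp = assms(4) and Sne = assms(5)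
    and r100 = assms(6) and cdef = assms(7) and hq = assms(8)
  have q: "0 < q" using p pq by simp
  have finS: "finite S" using Sp finite_subset by blast
  define g where "g i = FT q p \<alpha> (prime_idx p q i)" for i
  define \<beta> where "\<beta> i = FT p p \<alpha> i" for i
  define s where "s = sqrt (real p / real q)"
  have lhs: "restr_norm2 (FT q p \<alpha>) (prime_idx p q ` S) = (L2_set (\<lambda>i. cmod (g i)) S)\<^sup>2"
    unfolding restr_norm2_def L2_cmod_sq g_def
    by (simp add: sum.reindex[OF prime_idx_inj[OF p pq]])
  have c0: "0 \<le> c" unfolding cdef[symmetric] restr_norm2_def by (simp add: sum_nonneg)
  show ?thesis
  proof (cases "r \<le> 1 \<or> c = 0")
    case True
    have "real p / real q * (1 - 1 / r) * c \<le> 0"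
    proof (cases "c = 0")
      case False
      with True have "r \<le> 1" by simp
      then have "1 - 1 / r \<le> 0" using r100 by (simp add: field_simps)
      then have "(1 - 1 / r) * c \<le> 0" using c0 by (simp add: mult_nonpos_nonneg)
      then have "real p / real q * ((1 - 1 / r) * c) \<le> 0"
        by (meson mult_nonneg_nonpos of_nat_0_le_iff divide_nonneg_nonneg)
      then show ?thesis by (simp add: mult.assoc)
    qed simp
    then show ?thesis unfolding lhs by (meson order_trans zero_le_power2)
  next
    case False
    then have r1: "1 < r" and cpos: "0 < c" using c0 by auto
    have c1: "c \<le> 1"
    proof -
      have "c \<le> (\<Sum>i<p. (cmod (FT p p \<alpha> i))\<^sup>2)"
        unfolding cdef[symmetric] restr_norm2_def by (rule sum_mono2) (use Sp in auto)
      then show ?thesis unfolding parseval[OF p] a1 .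
    qed
    define x where "x = 2 * pi * (real p - 1) / real q"
    have x0: "0 \<le> x" unfolding x_def using p by auto
    have xb: "x \<le> sqrt c / (6 * r)"
    proof (cases "p = 1")
      case True
      then show ?thesis unfolding x_def using cpos r1 by simp
    next
      case False
      then have p2: "2 \<le> p" using p by simp
      have "real p * (1600 * r / sqrt c) \<le> real q"
      proof -
        have "1 \<le> card S" using Sne finS by (simp add: Suc_le_eq card_gt_0_iff)
        then show ?thesis using order_trans[OF ln_bounds[OF cpos c1 r1 _ p2, of "card S"] hq] by simp
      qed
      then have qb: "real p * 1600 * r \<le> real q * sqrt c" using cpos by (simp add: field_simps)
      have "x \<le> 2 * pi * real p / real q" unfolding x_def using q by (simp add: divide_right_mono)
      also have "\<dots> \<le> sqrt c / (6 * r)"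
      proof -
        have "2 * pi * real p * (6 * r) \<le> 8 * real p * (6 * r)"
          using pi_less_4 r1 by (intro mult_right_mono) auto
        also have "\<dots> \<le> real p * 1600 * r" using r1 by simp
        also have "\<dots> \<le> sqrt c * real q" using qb by (simp add: mult_ac)
        finally show ?thesis using q r1 by (simp add: divide_simps)
      qed
      finally show ?thesis .
    qed
    have sc1: "sqrt c \<le> 1" using c1 by simp
    have xle: "x \<le> 1/2"
    proof -
      have scr: "sqrt c \<le> r" using sc1 r1 by linarith
      have "sqrt c / (6 * r) \<le> 1 / 6" using scr r1 by (simp add: divide_simps)
      then show ?thesis using xb by linarith
    qed
    define \<theta> where "\<theta> i = real (prime_idx p q i) / real q - real i / real p" for i
    have th: "\<bar>\<theta> i\<bar> \<le> 1 / real q" for i unfolding \<theta>_def by (rule prime_idx_theta[OF p q])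
    have eq: "g i - complex_of_real s * \<beta> i = complex_of_real (1 / sqrt (real q)) *
            ((\<Sum>j<p. cis (2*pi*real j*real i/real p + 2*pi*real j*\<theta> i) * \<alpha> j)
             - (\<Sum>j<p. cis (2*pi*real j*real i/real p) * \<alpha> j))" for i
    proof -
      have "g i = complex_of_real (1 / sqrt (real q)) * (\<Sum>j<p. cis (2*pi*real j*real i/real p + 2*pi*real j*\<theta> i) * \<alpha> j)"
        unfolding g_def FT_expand \<theta>_def using p q by (simp add: field_simps)
      moreover have "complex_of_real s * \<beta> i = complex_of_real (1 / sqrt (real q)) * (\<Sum>j<p. cis (2*pi*real j*real i/real p) * \<alpha> j)"
      proof -
        have "s * (1 / sqrt (real p)) = 1 / sqrt (real q)"
          unfolding s_def using p by (simp add: real_sqrt_divide)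
        then have "complex_of_real s * complex_of_real (1 / sqrt (real p)) = complex_of_real (1 / sqrt (real q))"
          by (simp only: of_real_mult[symmetric])
        then show ?thesis unfolding \<beta>_def FT_expand mult.assoc[symmetric] by simp
      qed
      ultimately show ?thesis by (simp add: right_diff_distrib)
    qed
    have err: "L2_set (\<lambda>i. cmod (g i - complex_of_real s * \<beta> i)) S \<le> s * (3 * x)"
      unfolding eq unfolding s_def by (rule err_bound[OF p q a1 Sp th x_def xle])
    have bnorm: "L2_set (\<lambda>i. cmod (complex_of_real s * \<beta> i)) S = s * sqrt c"
    proof -
      have "L2_set (\<lambda>i. cmod (complex_of_real s * \<beta> i)) S = s * L2_set (\<lambda>i. cmod (\<beta> i)) S"
        unfolding s_def by (subst L2_set_right_distrib) (auto simp: norm_mult)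
      also have "L2_set (\<lambda>i. cmod (\<beta> i)) S = sqrt c"
        unfolding L2_set_def cdef[symmetric] restr_norm2_def \<beta>_def ..
      finally show ?thesis .
    qed
    have "L2_set (\<lambda>i. cmod (complex_of_real s * \<beta> i)) S \<le>
        L2_set (\<lambda>i. cmod (g i)) S + L2_set (\<lambda>i. cmod (complex_of_real s * \<beta> i - g i)) S"
      using L2_add_le[of g "\<lambda>i. complex_of_real s * \<beta> i - g i" S] by simp
    also have "L2_set (\<lambda>i. cmod (complex_of_real s * \<beta> i - g i)) S = L2_set (\<lambda>i. cmod (g i - complex_of_real s * \<beta> i)) S"
      by (simp add: norm_minus_commute)
    finally have low: "s * sqrt c - s * (3 * x) \<le> L2_set (\<lambda>i. cmod (g i)) S"
      using err bnorm by linarith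
    have s0: "0 \<le> s" unfolding s_def by simp
    have "s * (3 * x) \<le> s * (sqrt c / (2 * r))"
      using xb r1 s0 by (intro mult_left_mono) (auto simp: field_simps)
    then have low2: "s * sqrt c * (1 - 1 / (2 * r)) \<le> L2_set (\<lambda>i. cmod (g i)) S"
      using low by (simp add: algebra_simps)
    have "0 \<le> 1 - 1 / (2 * r)" using r1 by (simp add: field_simps)
    then have nn: "0 \<le> s * sqrt c * (1 - 1 / (2 * r))" using s0 c0 by simp
    have "(s * sqrt c * (1 - 1 / (2 * r)))\<^sup>2 \<le> (L2_set (\<lambda>i. cmod (g i)) S)\<^sup>2"
      by (rule power_mono[OF low2 nn])
    moreover have "real p / real q * (1 - 1 / r) * c \<le> (s * sqrt c * (1 - 1 / (2 * r)))\<^sup>2"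
    proof -
      have "(s * sqrt c * (1 - 1 / (2 * r)))\<^sup>2 = real p / real q * c * (1 - 1 / (2 * r))\<^sup>2"
        unfolding s_def using c0 by (simp add: power_mult_distrib)
      moreover have "1 - 1 / r \<le> (1 - 1 / (2 * r))\<^sup>2"
        using r1 by (simp add: power2_eq_square field_simps)
      then have "real p / real q * c * (1 - 1 / r) \<le> real p / real q * c * (1 - 1 / (2 * r))\<^sup>2"
        by (rule mult_left_mono) (use c0 in simp)
      ultimately show ?thesis by (simp add: mult_ac)
    qed
    ultimately show ?thesis unfolding lhs by linarith
  qed
qed

end
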